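(* Let $A_1A_2A_3$ be a gyrotriangle possessing a circumgyrocircle in the Einstein gyrovector space $\mathbb{R}^n_s$, $n\ge2$, $\gamma_{ij}=\gamma_{\ominus A_i\oplus A_j}$. For a parameter $0\le t_1\le1$ let $$P=\frac{(1-t_1)\gamma_{A_1}A_1+t_1\gamma_{A_2}A_2}{(1-t_1)\gamma_{A_1}+t_1\gamma_{A_2}}$$ (a point of the gyrosegment $A_1A_2$), and let $Q$ be the foot of the corresponding circumgyrocevian, i.e. the point other than $A_3$ where the gyroray from $A_3$ through $P$ meets the circumgyrocircle. Then $Q=\frac{m_1\gamma_{A_1}A_1+m_2\gamma_{A_2}A_2+m_3\gamma_{A_3}A_3}{m_1\gamma_{A_1}+m_2\gamma_{A_2}+m_3\gamma_{A_3}}$ with $m_1=\{\gamma_{13}-1+(\gamma_{23}-\gamma_{13})t_1\}(1-t_1)$, $m_2=\{\gamma_{13}-1+(\gamma_{23}-\gamma_{13})t_1\}t_1$, $m_3=-(\gamma_{12}-1)(1-t_1)t_1$.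
   Context: Fix $s>0$; $\mathbb{R}^n_s=\{v\in\mathbb{R}^n:\|v\|<s\}$ with Einstein addition $u\oplus v=\frac{1}{1+u\cdot v/s^2}\{u+\frac{1}{\gamma_u}v+\frac{1}{s^2}\frac{\gamma_u}{1+\gamma_u}(u\cdot v)u\}$, $\gamma_v=(1-\|v\|^2/s^2)^{-1/2}$, $\ominus v=-v$; gyrodistance $\|\ominus X\oplus Y\|$. Gyrosegments/gyrorays are Euclidean segments/rays intersected with the ball. A gyrotriangle $A_1A_2A_3$ has $\ominus A_1\oplus A_2,\ominus A_1\oplus A_3$ linearly independent; its circumgyrocircle is the set of points of the gyroplane $(A_1\oplus\mathrm{span}\{\ominus A_1\oplus A_2,\ominus A_1\oplus A_3\})\cap\mathbb{R}^n_s$ at gyrodistance $R$ from the point $O$ of that gyroplane equigyrodistant (distance $R$) from the vertices. Gyrobarycentric coordinates are homogeneous. *)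

theory Defs
  imports "HOL-Analysis.Analysis"
begin

definition sball :: "real \<Rightarrow> ('a::real_inner) set" where
  "sball s = {v. norm v < s}"

definition egamma :: "real \<Rightarrow> 'a::real_inner \<Rightarrow> real" where
  "egamma s v = 1 / sqrt (1 - (norm v)\<^sup>2 / s\<^sup>2)"

definition eadd :: "real \<Rightarrow> 'a::real_inner \<Rightarrow> 'a \<Rightarrow> 'a" where
  "eadd s u v = (1 / (1 + (u \<bullet> v) / s\<^sup>2)) *\<^sub>R
     (u + (1 / egamma s u) *\<^sub>R v
        + ((1 / s\<^sup>2) * (egamma s u / (1 + egamma s u)) * (u \<bullet> v)) *\<^sub>R u)"

text \<open>gyrodistance \<open>\<parallel>\<ominus>X \<oplus> Y\<parallel>\<close>, with \<open>\<ominus>X = -X\<close>\<close>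
definition gyrodist :: "real \<Rightarrow> 'a::real_inner \<Rightarrow> 'a \<Rightarrow> real" where
  "gyrodist s X Y = norm (eadd s (- X) Y)"

definition gyrotriangle :: "real \<Rightarrow> 'a::real_inner \<Rightarrow> 'a \<Rightarrow> 'a \<Rightarrow> bool" where
  "gyrotriangle s A1 A2 A3 \<longleftrightarrow> A1 \<in> sball s \<and> A2 \<in> sball s \<and> A3 \<in> sball s \<and>
     independent {eadd s (- A1) A2, eadd s (- A1) A3} \<and>
     eadd s (- A1) A2 \<noteq> eadd s (- A1) A3"

definition gyroplane :: "real \<Rightarrow> 'a::real_inner \<Rightarrow> 'a \<Rightarrow> 'a \<Rightarrow> 'a set" where
  "gyroplane s A1 A2 A3 =
     (eadd s A1 ` span {eadd s (- A1) A2, eadd s (- A1) A3}) \<inter> sball s"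

definition circumcenter :: "real \<Rightarrow> 'a::real_inner \<Rightarrow> 'a \<Rightarrow> 'a \<Rightarrow> 'a \<Rightarrow> real \<Rightarrow> bool" where
  "circumcenter s A1 A2 A3 C R \<longleftrightarrow> C \<in> gyroplane s A1 A2 A3 \<and>
     gyrodist s C A1 = R \<and> gyrodist s C A2 = R \<and> gyrodist s C A3 = R"

definition has_circumgyrocircle :: "real \<Rightarrow> 'a::real_inner \<Rightarrow> 'a \<Rightarrow> 'a \<Rightarrow> bool" where
  "has_circumgyrocircle s A1 A2 A3 \<longleftrightarrow> (\<exists>C R. circumcenter s A1 A2 A3 C R)"

definition circumgyrocircle :: "real \<Rightarrow> 'a::real_inner \<Rightarrow> 'a \<Rightarrow> 'a \<Rightarrow> 'a set" where
  "circumgyrocircle s A1 A2 A3 =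
     {X \<in> gyroplane s A1 A2 A3. \<exists>C R. circumcenter s A1 A2 A3 C R \<and> gyrodist s C X = R}"

definition gyroray :: "real \<Rightarrow> 'a::real_inner \<Rightarrow> 'a \<Rightarrow> 'a set" where
  "gyroray s A B = {A + l *\<^sub>R (B - A) | l. l \<ge> 0} \<inter> sball s"

end

theory Submission
  imports Defs
begin

lemma egamma_sq:
  assumes s: "s > 0" and u: "norm (u::'a::real_inner) < s"
  shows "egamma s u > 0" "1 - (norm u)\<^sup>2 / s\<^sup>2 > 0" "(egamma s u)\<^sup>2 * (1 - (norm u)\<^sup>2 / s\<^sup>2) = 1"
proof -
  have "(norm u)\<^sup>2 < s\<^sup>2" using u s by (smt (verit) norm_ge_zero power_strict_mono zero_less_numeral pos2)
  then have "(norm u)\<^sup>2 / s\<^sup>2 < 1" using s by simp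
  then show p: "1 - (norm u)\<^sup>2 / s\<^sup>2 > 0" by linarith
  then show "egamma s u > 0" by (simp add: egamma_def)
  show "(egamma s u)\<^sup>2 * (1 - (norm u)\<^sup>2 / s\<^sup>2) = 1" using p
  proof -
    have "\<And>z::real. z > 0 \<Longrightarrow> (1 / sqrt z)\<^sup>2 * z = 1" by (simp add: power_divide)
    from this[OF p] show ?thesis unfolding egamma_def .
  qed
qed

lemma norm_eadd:
  fixes u v :: "'a::real_inner"
  assumes s: "s > 0" and u: "norm u < s" and h: "1 + (u \<bullet> v)/s\<^sup>2 \<noteq> 0"
  shows "(1 + (u \<bullet> v)/s\<^sup>2)\<^sup>2 * (1 - (norm (eadd s u v))\<^sup>2/s\<^sup>2) = (1 - (norm u)\<^sup>2/s\<^sup>2) * (1 - (norm v)\<^sup>2/s\<^sup>2)"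
proof -
  define g where "g = egamma s u"
  define a where "a = u \<bullet> u"
  define b where "b = u \<bullet> v"
  define d where "d = v \<bullet> v"
  define c where "c = (1 / s\<^sup>2) * (g / (1 + g)) * b"
  have g0: "g > 0" using egamma_sq[OF s u] g_def by simp
  have ga: "g\<^sup>2 * (1 - a / s\<^sup>2) = 1" using egamma_sq[OF s u] g_def a_def by (simp add: power2_norm_eq_inner)
  have a_eq: "a = s\<^sup>2 - s\<^sup>2 / g\<^sup>2" using ga g0 s by (simp add: field_simps)
  define N where "N = (1 + c) *\<^sub>R u + (1/g) *\<^sub>R v"
  have e: "eadd s u v = (1 / (1 + b / s\<^sup>2)) *\<^sub>R N"
    unfolding eadd_def N_def c_def b_def g_def by (simp add: algebra_simps)
  have nN: "N \<bullet> N = (1+c)\<^sup>2 * a + 2 * (1+c) * b / g + d / g\<^sup>2"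
    unfolding N_def a_def b_def d_def by (simp add: inner_add_left inner_add_right inner_commute power2_eq_square algebra_simps add_divide_distrib)
  have ne: "(norm (eadd s u v))\<^sup>2 = N \<bullet> N / (1 + b/s\<^sup>2)\<^sup>2"
    unfolding e power2_norm_eq_inner by (simp add: power2_eq_square)
  have hb: "1 + b/s\<^sup>2 \<noteq> 0" using h b_def by simp
  define gi where "gi = 1 / g"
  define h where "h = 1 / (1 + g)"
  define si where "si = 1 / s\<^sup>2"
  have r1: "gi * g = 1" using g0 gi_def by simp
  have r2: "h * (1 + g) = 1" using g0 h_def by simp
  have r3: "si * s\<^sup>2 = 1" using s si_def by simp
  have r4: "g\<^sup>2 * (1 - a * si) = 1" using ga si_def by simp
  have cc: "c = si * g * h * b" unfolding c_def si_def h_def by simp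
  have nN': "N \<bullet> N = (1+c)\<^sup>2 * a + 2 * (1+c) * b * gi + d * gi\<^sup>2"
    unfolding nN gi_def by (simp add: field_simps)
  have key0: "(1 + b * si)\<^sup>2 - N \<bullet> N * si = (1 - a * si) * (1 - d * si)"
    unfolding nN' cc using r1 r2 r3 r4 by algebra
  have key: "(1 + b/s\<^sup>2)\<^sup>2 - N \<bullet> N / s\<^sup>2 = (1 - a/s\<^sup>2) * (1 - d/s\<^sup>2)"
    using key0 unfolding si_def by simp
  show ?thesis
    using key hb unfolding ne
    by (simp add: field_simps power2_norm_eq_inner a_def d_def b_def)
qed
lemma egamma_eadd:
  fixes x y :: "'a::real_inner"
  assumes s: "s > 0" and x: "norm x < s" and y: "norm y < s"
  shows "norm (eadd s (-x) y) < s"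
    "egamma s (eadd s (-x) y) = egamma s x * egamma s y * (1 - (x \<bullet> y)/s\<^sup>2)"
    "1 - (x \<bullet> y)/s\<^sup>2 > 0"
proof -
  have xm: "norm (-x) < s" using x by simp
  have "\<bar>x \<bullet> y\<bar> \<le> norm x * norm y" by (rule Cauchy_Schwarz_ineq2)
  also have "\<dots> < s * s" using x y by (simp add: mult_strict_mono')
  finally have "x \<bullet> y < s\<^sup>2" by (simp add: power2_eq_square)
  then have "(x \<bullet> y)/s\<^sup>2 < 1" using s by simp
  then show t: "1 - (x \<bullet> y)/s\<^sup>2 > 0" by linarith
  have heq: "1 + ((-x) \<bullet> y)/s\<^sup>2 = 1 - (x \<bullet> y)/s\<^sup>2" by simp
  have h: "1 + ((-x) \<bullet> y)/s\<^sup>2 \<noteq> 0" unfolding heq using t by linarith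
  note ne = norm_eadd[OF s xm h]
  define Z where "Z = 1 - (norm (eadd s (-x) y))\<^sup>2/s\<^sup>2"
  define Ax where "Ax = 1 - (norm x)\<^sup>2/s\<^sup>2"
  define Ay where "Ay = 1 - (norm y)\<^sup>2/s\<^sup>2"
  define T where "T = 1 - (x \<bullet> y)/s\<^sup>2"
  have Ax: "Ax > 0" using egamma_sq(2)[OF s x] Ax_def by simp
  have Ay: "Ay > 0" using egamma_sq(2)[OF s y] Ay_def by simp
  have T: "T > 0" using t T_def by simp
  have e: "T\<^sup>2 * Z = Ax * Ay" using ne unfolding Z_def Ax_def Ay_def T_def by simp
  have Z: "Z = Ax * Ay / T\<^sup>2" using e T by (simp add: field_simps)
  have Zp: "Z > 0" unfolding Z using Ax Ay T by simp
  then have "(norm (eadd s (-x) y))\<^sup>2 < s\<^sup>2" unfolding Z_def using s by (simp add: field_simps)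
  then show "norm (eadd s (-x) y) < s" using s by (smt (verit) norm_ge_zero power_mono)
  have "egamma s (eadd s (-x) y) = 1 / sqrt Z" unfolding egamma_def Z_def ..
  also have "\<dots> = T / (sqrt Ax * sqrt Ay)" unfolding Z using Ax Ay T
    by (simp add: real_sqrt_divide real_sqrt_mult)
  also have "\<dots> = egamma s x * egamma s y * T" unfolding egamma_def Ax_def Ay_def by simp
  finally show "egamma s (eadd s (-x) y) = egamma s x * egamma s y * (1 - (x \<bullet> y)/s\<^sup>2)"
    unfolding T_def .
qed

lemma egamma_gt1_ne0:
  assumes s: "s > 0" and w: "norm w < s" and w0: "w \<noteq> 0"
  shows "egamma s w > 1"
proof -
  have p: "1 - (norm w)\<^sup>2 / s\<^sup>2 > 0" using egamma_sq(2)[OF s w] .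
  have "norm w > 0" using w0 by simp
  then have "(norm w)\<^sup>2 / s\<^sup>2 > 0" using s by simp
  then have q: "1 - (norm w)\<^sup>2 / s\<^sup>2 < 1" by simp
  have "sqrt (1 - (norm w)\<^sup>2 / s\<^sup>2) < 1" using q p by (simp add: real_sqrt_lt_1_iff)
  then show ?thesis unfolding egamma_def using p by (simp add: less_divide_eq)
qed

lemma egamma_gt1_neq:
  fixes x y :: "'a::real_inner"
  assumes s: "s > 0" and x: "norm x < s" and y: "norm y < s" and xy: "x \<noteq> y"
  shows "egamma s (eadd s (-x) y) > 1"
proof -
  define z where "z = y - x"
  have yz: "y = x + z" using z_def by simp
  have z0: "z \<bullet> z > 0" using xy z_def by simp
  define X where "X = x \<bullet> x"
  define p where "p = x \<bullet> z"
  define Zz where "Zz = z \<bullet> z"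
  have X: "X < s\<^sup>2" using x s X_def by (smt (verit) norm_ge_zero power_strict_mono power2_norm_eq_inner zero_less_numeral pos2)
  have xy1: "x \<bullet> y = X + p" unfolding yz X_def p_def by (simp add: inner_add_right)
  have yy: "(norm y)\<^sup>2 = X + 2 * p + Zz" unfolding power2_norm_eq_inner yz X_def p_def Zz_def
    by (simp add: inner_add_right inner_add_left inner_commute)
  have xx: "(norm x)\<^sup>2 = X" unfolding power2_norm_eq_inner X_def ..
  define T where "T = 1 - (x \<bullet> y)/s\<^sup>2"
  define Ax where "Ax = 1 - (norm x)\<^sup>2/s\<^sup>2"
  define Ay where "Ay = 1 - (norm y)\<^sup>2/s\<^sup>2"
  have T: "T > 0" using egamma_eadd(3)[OF s x y] T_def by simp
  have Ax: "Ax > 0" using egamma_sq(2)[OF s x] Ax_def by simp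
  have Ay: "Ay > 0" using egamma_sq(2)[OF s y] Ay_def by simp
  have "s\<^sup>2 * s\<^sup>2 * (T\<^sup>2 - Ax * Ay) = p\<^sup>2 + (s\<^sup>2 - X) * Zz"
    unfolding T_def Ax_def Ay_def xy1 yy xx using s by (simp add: field_simps power2_eq_square)
  moreover have "p\<^sup>2 + (s\<^sup>2 - X) * Zz > 0" using X z0 Zz_def by (simp add: add_nonneg_pos)
  ultimately have "s\<^sup>2 * s\<^sup>2 * (T\<^sup>2 - Ax * Ay) > 0" by simp
  moreover have "s\<^sup>2 * s\<^sup>2 > 0" using s by simp
  ultimately have "T\<^sup>2 - Ax * Ay > 0" by (simp add: zero_less_mult_iff)
  then have "sqrt (Ax * Ay) < sqrt (T\<^sup>2)" by (intro real_sqrt_less_mono) simp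
  then have "sqrt (Ax * Ay) < T" using T by simp
  then have "T / (sqrt Ax * sqrt Ay) > 1" using Ax Ay by (simp add: real_sqrt_mult)
  moreover have "egamma s (eadd s (-x) y) = T / (sqrt Ax * sqrt Ay)"
    using egamma_eadd(2)[OF s x y] unfolding T_def Ax_def Ay_def egamma_def by simp
  ultimately show ?thesis by simp
qed

lemma egamma_norm_eq: "norm v = norm w \<Longrightarrow> egamma s v = egamma s w"
  unfolding egamma_def by simp

theorem mainTheorem17:
  fixes s :: real and A1 A2 A3 P Q :: "real ^ 'n" and t1 :: real
  assumes "CARD('n) \<ge> 2" and "s > 0"
    and "gyrotriangle s A1 A2 A3"
    and "has_circumgyrocircle s A1 A2 A3"
    and "0 \<le> t1" and "t1 \<le> 1"
    and "P = (1 / ((1 - t1) * egamma s A1 + t1 * egamma s A2)) *\<^sub>R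
               (((1 - t1) * egamma s A1) *\<^sub>R A1 + (t1 * egamma s A2) *\<^sub>R A2)"
    and "Q \<in> gyroray s A3 P" and "Q \<in> circumgyrocircle s A1 A2 A3" and "Q \<noteq> A3"
  shows "let g12 = egamma s (eadd s (- A1) A2);
             g13 = egamma s (eadd s (- A1) A3);
             g23 = egamma s (eadd s (- A2) A3);
             m1 = (g13 - 1 + (g23 - g13) * t1) * (1 - t1);
             m2 = (g13 - 1 + (g23 - g13) * t1) * t1;
             m3 = - (g12 - 1) * (1 - t1) * t1
         in Q = (1 / (m1 * egamma s A1 + m2 * egamma s A2 + m3 * egamma s A3)) *\<^sub>R
                  ((m1 * egamma s A1) *\<^sub>R A1 + (m2 * egamma s A2) *\<^sub>R A2
                   + (m3 * egamma s A3) *\<^sub>R A3)"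
proof -
  note s = assms(2)
  define t where "t = t1"
  have t0: "0 \<le> t" "t \<le> 1" using assms(5,6) t_def by auto
  have a1: "norm A1 < s" and a2: "norm A2 < s" and a3: "norm A3 < s"
    and ind: "independent {eadd s (- A1) A2, eadd s (- A1) A3}"
    and u23: "eadd s (- A1) A2 \<noteq> eadd s (- A1) A3"
    using assms(3) unfolding gyrotriangle_def sball_def by auto
  obtain C R where cc: "circumcenter s A1 A2 A3 C R" and cq: "gyrodist s C Q = R"
    using assms(9) unfolding circumgyrocircle_def by auto
  have c: "norm C < s" using cc unfolding circumcenter_def gyroplane_def sball_def by auto
  obtain l where l0: "l \<ge> 0" and qdef: "Q = A3 + l *\<^sub>R (P - A3)" and q: "norm Q < s"
    using assms(8) unfolding gyroray_def sball_def by auto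
  have lne: "l \<noteq> 0" using qdef assms(10) by auto
  define G1 where "G1 = egamma s A1"
  define G2 where "G2 = egamma s A2"
  define G3 where "G3 = egamma s A3"
  define GQ where "GQ = egamma s Q"
  define GC where "GC = egamma s C"
  define g12 where "g12 = egamma s (eadd s (- A1) A2)"
  define g13 where "g13 = egamma s (eadd s (- A1) A3)"
  define g23 where "g23 = egamma s (eadd s (- A2) A3)"
  have G1p: "G1 > 0" using egamma_sq(1)[OF s a1] G1_def by simp
  have G2p: "G2 > 0" using egamma_sq(1)[OF s a2] G2_def by simp
  have G3p: "G3 > 0" using egamma_sq(1)[OF s a3] G3_def by simp
  have GCp: "GC > 0" using egamma_sq(1)[OF s c] GC_def by simp
  have eqs: "egamma s (eadd s (-C) A1) = egamma s (eadd s (-C) Q)"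
     "egamma s (eadd s (-C) A2) = egamma s (eadd s (-C) Q)"
     "egamma s (eadd s (-C) A3) = egamma s (eadd s (-C) Q)"
    using cc cq unfolding circumcenter_def gyrodist_def by (auto intro: egamma_norm_eq)
  define K where "K = egamma s (eadd s (-C) Q) / GC"
  have KQ: "GQ * (1 - (C \<bullet> Q)/s\<^sup>2) = K"
    unfolding K_def egamma_eadd(2)[OF s c q] using GCp GC_def GQ_def by simp
  have K1: "G1 * (1 - (C \<bullet> A1)/s\<^sup>2) = K"
    unfolding K_def eqs(1)[symmetric] egamma_eadd(2)[OF s c a1] using GCp GC_def G1_def by simp
  have K2: "G2 * (1 - (C \<bullet> A2)/s\<^sup>2) = K"
    unfolding K_def eqs(2)[symmetric] egamma_eadd(2)[OF s c a2] using GCp GC_def G2_def by simp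
  have K3: "G3 * (1 - (C \<bullet> A3)/s\<^sup>2) = K"
    unfolding K_def eqs(3)[symmetric] egamma_eadd(2)[OF s c a3] using GCp GC_def G3_def by simp
  have Kp: "K > 0" using K1 G1p egamma_eadd(3)[OF s c a1] by (metis mult_pos_pos)
  define D where "D = (1 - t) * G1 + t * G2"
  have Dp: "D > 0" unfolding D_def using t0 G1p G2p
    by (cases "t = 1") (auto intro: add_pos_nonneg add_nonneg_pos mult_pos_pos)
  define \<alpha> where "\<alpha> = l / D"
  define \<beta> where "\<beta> = (1 - l) / G3"
  have \<alpha>ne: "\<alpha> \<noteq> 0" using lne Dp \<alpha>_def by simp
  have Pd: "P = (1 / D) *\<^sub>R (((1 - t) * G1) *\<^sub>R A1 + (t * G2) *\<^sub>R A2)"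
    using assms(7) unfolding D_def G1_def G2_def t_def .
  have Qb: "Q = (\<alpha> * (1 - t) * G1) *\<^sub>R A1 + (\<alpha> * t * G2) *\<^sub>R A2 + (\<beta> * G3) *\<^sub>R A3"
  proof -
    have bG: "\<beta> * G3 = 1 - l" unfolding \<beta>_def using G3p by simp
    have "Q = (1 - l) *\<^sub>R A3 + l *\<^sub>R P" unfolding qdef by (simp add: algebra_simps)
    moreover have "l *\<^sub>R P = (\<alpha> * (1 - t) * G1) *\<^sub>R A1 + (\<alpha> * t * G2) *\<^sub>R A2"
      unfolding Pd \<alpha>_def by (simp add: scaleR_add_right mult.assoc)
    ultimately show ?thesis unfolding bG by simp
  qed
  have sum1: "\<alpha> * (1 - t) * G1 + \<alpha> * t * G2 + \<beta> * G3 = 1"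
  proof -
    have "\<alpha> * (1 - t) * G1 + \<alpha> * t * G2 = \<alpha> * D" by (simp add: D_def algebra_simps)
    also have "\<dots> = l" using Dp \<alpha>_def by simp
    finally show ?thesis using G3p \<beta>_def by simp
  qed
  define si where "si = 1 / s\<^sup>2"
  define c1 where "c1 = C \<bullet> A1"
  define c2 where "c2 = C \<bullet> A2"
  define c3 where "c3 = C \<bullet> A3"
  have cQ: "C \<bullet> Q = (\<alpha> * (1 - t) * G1) * c1 + (\<alpha> * t * G2) * c2 + (\<beta> * G3) * c3"
    unfolding Qb c1_def c2_def c3_def by (simp add: inner_add_right)
  have KQ': "GQ * (1 - ((\<alpha> * (1 - t) * G1) * c1 + (\<alpha> * t * G2) * c2 + (\<beta> * G3) * c3) * si) = K"
    using KQ unfolding cQ si_def by simp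
  have K1': "G1 * (1 - c1 * si) = K" using K1 unfolding c1_def si_def by simp
  have K2': "G2 * (1 - c2 * si) = K" using K2 unfolding c2_def si_def by simp
  have K3': "G3 * (1 - c3 * si) = K" using K3 unfolding c3_def si_def by simp
  have ex: "\<alpha> * (1 - t) * (G1 * (1 - c1 * si)) + \<alpha> * t * (G2 * (1 - c2 * si)) + \<beta> * (G3 * (1 - c3 * si))
     = (\<alpha> * (1 - t) * G1 + \<alpha> * t * G2 + \<beta> * G3) - ((\<alpha> * (1 - t) * G1) * c1 + (\<alpha> * t * G2) * c2 + (\<beta> * G3) * c3) * si"
    by (simp add: algebra_simps)
  have "\<alpha> * (1 - t) * K + \<alpha> * t * K + \<beta> * K = 1 - ((\<alpha> * (1 - t) * G1) * c1 + (\<alpha> * t * G2) * c2 + (\<beta> * G3) * c3) * si"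
    using ex unfolding K1' K2' K3' sum1 .
  moreover have "\<alpha> * (1 - t) * K + \<alpha> * t * K + \<beta> * K = K * (\<alpha> + \<beta>)" by (simp add: algebra_simps)
  ultimately have "K * (\<alpha> + \<beta>) = 1 - ((\<alpha> * (1 - t) * G1) * c1 + (\<alpha> * t * G2) * c2 + (\<beta> * G3) * c3) * si" by simp
  then have "GQ * (K * (\<alpha> + \<beta>)) = K" using KQ' by simp
  then have "K * (GQ * (\<alpha> + \<beta>)) = K * 1" by (simp add: algebra_simps)
  then have GQab: "GQ * (\<alpha> + \<beta>) = 1" using Kp by simp
  define n1 where "n1 = A1 \<bullet> A1"
  define n2 where "n2 = A2 \<bullet> A2"
  define n3 where "n3 = A3 \<bullet> A3"
  define p12 where "p12 = A1 \<bullet> A2"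
  define p13 where "p13 = A1 \<bullet> A3"
  define p23 where "p23 = A2 \<bullet> A3"
  define nQ where "nQ = Q \<bullet> Q"
  have nQe: "nQ = (\<alpha> * (1 - t) * G1)\<^sup>2 * n1 + (\<alpha> * t * G2)\<^sup>2 * n2 + (\<beta> * G3)\<^sup>2 * n3
      + 2 * (\<alpha> * (1 - t) * G1) * (\<alpha> * t * G2) * p12
      + 2 * (\<alpha> * (1 - t) * G1) * (\<beta> * G3) * p13
      + 2 * (\<alpha> * t * G2) * (\<beta> * G3) * p23"
    unfolding nQ_def n1_def n2_def n3_def p12_def p13_def p23_def Qb
    by (simp add: inner_add_left inner_add_right inner_commute power2_eq_square algebra_simps)
  have RQ: "GQ\<^sup>2 * (1 - nQ * si) = 1"
    using egamma_sq(3)[OF s q] unfolding GQ_def nQ_def si_def power2_norm_eq_inner by simp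
  have R1: "G1\<^sup>2 * (1 - n1 * si) = 1"
    using egamma_sq(3)[OF s a1] unfolding G1_def n1_def si_def power2_norm_eq_inner by simp
  have R2: "G2\<^sup>2 * (1 - n2 * si) = 1"
    using egamma_sq(3)[OF s a2] unfolding G2_def n2_def si_def power2_norm_eq_inner by simp
  have R3: "G3\<^sup>2 * (1 - n3 * si) = 1"
    using egamma_sq(3)[OF s a3] unfolding G3_def n3_def si_def power2_norm_eq_inner by simp
  have r12: "g12 = G1 * G2 * (1 - p12 * si)"
    using egamma_eadd(2)[OF s a1 a2] unfolding g12_def G1_def G2_def p12_def si_def by simp
  have r13: "g13 = G1 * G3 * (1 - p13 * si)"
    using egamma_eadd(2)[OF s a1 a3] unfolding g13_def G1_def G3_def p13_def si_def by simp
  have r23: "g23 = G2 * G3 * (1 - p23 * si)"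
    using egamma_eadd(2)[OF s a2 a3] unfolding g23_def G2_def G3_def p23_def si_def by simp
  define k where "k = g13 - 1 + (g23 - g13) * t"
  have quad: "\<alpha> * (\<alpha> * (1 - t) * t * (g12 - 1) + \<beta> * k) = 0"
  proof -
    define b1 where "b1 = \<alpha> * (1 - t)"
    define b2 where "b2 = \<alpha> * t"
    have sum1': "b1 * G1 + b2 * G2 + \<beta> * G3 = 1" using sum1 unfolding b1_def b2_def .
    have nQe': "nQ = (b1 * G1)\<^sup>2 * n1 + (b2 * G2)\<^sup>2 * n2 + (\<beta> * G3)\<^sup>2 * n3
      + 2 * (b1 * G1) * (b2 * G2) * p12 + 2 * (b1 * G1) * (\<beta> * G3) * p13 + 2 * (b2 * G2) * (\<beta> * G3) * p23"
      using nQe unfolding b1_def b2_def .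
    have "(\<alpha> + \<beta>)\<^sup>2 = (GQ * (\<alpha> + \<beta>))\<^sup>2 * (1 - nQ * si)" using RQ by (simp add: power_mult_distrib)
    then have E0: "(\<alpha> + \<beta>)\<^sup>2 = 1 - nQ * si" unfolding GQab by simp
    have E1: "1 - nQ * si = (b1 * G1 + b2 * G2 + \<beta> * G3)\<^sup>2 - nQ * si" unfolding sum1' by simp
    have E2: "(b1 * G1 + b2 * G2 + \<beta> * G3)\<^sup>2 - nQ * si =
        b1\<^sup>2 * (G1\<^sup>2 * (1 - n1 * si)) + b2\<^sup>2 * (G2\<^sup>2 * (1 - n2 * si)) + \<beta>\<^sup>2 * (G3\<^sup>2 * (1 - n3 * si))
        + 2 * b1 * b2 * (G1 * G2 * (1 - p12 * si)) + 2 * b1 * \<beta> * (G1 * G3 * (1 - p13 * si))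
        + 2 * b2 * \<beta> * (G2 * G3 * (1 - p23 * si))"
      unfolding nQe' by algebra
    have E3: "(\<alpha> + \<beta>)\<^sup>2 = b1\<^sup>2 + b2\<^sup>2 + \<beta>\<^sup>2 + 2 * b1 * b2 * g12 + 2 * b1 * \<beta> * g13 + 2 * b2 * \<beta> * g23"
      using E0 E1 E2 unfolding R1 R2 R3 r12[symmetric] r13[symmetric] r23[symmetric] by simp
    show ?thesis using E3 unfolding k_def b1_def b2_def by algebra
  qed
  then have quad2: "\<alpha> * (1 - t) * t * (g12 - 1) + \<beta> * k = 0" using \<alpha>ne by simp
  have u30: "eadd s (- A1) A3 \<noteq> 0"
  proof
    assume "eadd s (- A1) A3 = 0"
    then have "0 \<in> {eadd s (- A1) A2, eadd s (- A1) A3}" by simp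
    then have "dependent {eadd s (- A1) A2, eadd s (- A1) A3}" by (rule dependent_zero)
    with ind show False by simp
  qed
  have A23: "A2 \<noteq> A3" using u23 by auto
  have g13g: "g13 > 1" using egamma_gt1_ne0[OF s egamma_eadd(1)[OF s a1 a3] u30] g13_def by simp
  have g23g: "g23 > 1" using egamma_gt1_neq[OF s a2 a3 A23] g23_def by simp
  have kp: "k > 0"
  proof -
    have "k = (1 - t) * (g13 - 1) + t * (g23 - 1)" unfolding k_def by (simp add: algebra_simps)
    moreover have "(1 - t) * (g13 - 1) + t * (g23 - 1) > 0" using t0 g13g g23g
      by (cases "t = 1") (auto intro: add_pos_nonneg add_nonneg_pos mult_pos_pos)
    ultimately show ?thesis by simp
  qed
  define cf where "cf = k / \<alpha>"
  have cfne: "cf \<noteq> 0" using kp \<alpha>ne cf_def by simp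
  define m1 where "m1 = (g13 - 1 + (g23 - g13) * t1) * (1 - t1)"
  define m2 where "m2 = (g13 - 1 + (g23 - g13) * t1) * t1"
  define m3 where "m3 = - (g12 - 1) * (1 - t1) * t1"
  have e1: "m1 * G1 = cf * (\<alpha> * (1 - t) * G1)" unfolding m1_def cf_def k_def t_def using \<alpha>ne by simp
  have e2: "m2 * G2 = cf * (\<alpha> * t * G2)" unfolding m2_def cf_def k_def t_def using \<alpha>ne by simp
  have e3: "m3 * G3 = cf * (\<beta> * G3)"
  proof -
    have hb: "\<beta> * k = - (\<alpha> * ((1 - t) * t * (g12 - 1)))" using quad2 by (simp add: algebra_simps)
    have "cf * \<beta> = (\<beta> * k) / \<alpha>" unfolding cf_def by simp
    also have "\<dots> = - ((1 - t) * t * (g12 - 1))" unfolding hb using \<alpha>ne by simp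
    also have "\<dots> = m3" unfolding m3_def t_def by (simp add: algebra_simps)
    finally have "cf * \<beta> = m3" .
    then show ?thesis by (simp add: mult.assoc[symmetric])
  qed
  have den: "m1 * G1 + m2 * G2 + m3 * G3 = cf"
    unfolding e1 e2 e3 distrib_left[symmetric] sum1 by simp
  have num: "(m1 * G1) *\<^sub>R A1 + (m2 * G2) *\<^sub>R A2 + (m3 * G3) *\<^sub>R A3 = cf *\<^sub>R Q"
    unfolding e1 e2 e3 Qb by (simp add: scaleR_add_right)
  have fin: "Q = (1 / (m1 * G1 + m2 * G2 + m3 * G3)) *\<^sub>R
      ((m1 * G1) *\<^sub>R A1 + (m2 * G2) *\<^sub>R A2 + (m3 * G3) *\<^sub>R A3)"
    unfolding den num using cfne by simp
  show ?thesis
    using fin unfolding Let_def m1_def m2_def m3_def g12_def g13_def g23_def G1_def G2_def G3_def .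
qed

end
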